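(* Let $V$ be a Lévy measure. Set $\mathcal{A}_{sym}=\emptyset$ if $V$ is symmetric and $\mathcal{A}_{sym}=\{1\}$ otherwise. Let $0<p\le q\le2$, $\mathcal{A}=\{p,q\}\cup\mathcal{A}_{sym}$, $p_{\min}=\min\mathcal{A}$, $p_{\max}=\max\mathcal{A}$, and assume $V\in\mathscr{M}(p_{\min},p_{\max})$. Define $g(\omega)=\int_{\mathbb{R}\setminus\{0\}}\left(\mathrm{e}^{\mathrm{j}\omega a}-1-\mathrm{j}\omega a\mathbb{1}_{|a|<1}\right)V(\mathrm{d}a)$. Then there exist constants $\kappa_1,\kappa_2\ge0$ such that for all $\omega\in\mathbb{R}$, $|g(\omega)|\le\kappa_1|\omega|^{p_{\min}}+\kappa_2|\omega|^{p_{\max}}$.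
   Context: A Lévy measure is a Radon measure $V$ on $\mathbb{R}\setminus\{0\}$ with $\int\min(1,a^2)V(\mathrm{d}a)<\infty$; it is symmetric if $V(B)=V(-B)$ for all Borel $B$. $\mathscr{M}(p,q)$ is the set of Radon measures $V$ on $\mathbb{R}\setminus\{0\}$ with $\int_{0<|a|<1}|a|^qV(\mathrm{d}a)<\infty$ and $\int_{|a|\ge1}|a|^pV(\mathrm{d}a)<\infty$. *)

theory Defs
  imports "HOL-Analysis.Analysis"
begin

text \<open>Measures on the real line that do not charge the origin stand for
  measures on R minus 0.  A Levy measure: Borel measure V with V{0}=0 and
  integral of min(1,a^2) finite (this implies local finiteness on R minus 0,
  i.e. the Radon property there).\<close>
definition levy_measure :: "real measure \<Rightarrow> bool" where
  "levy_measure V \<longleftrightarrow> sets V = sets borel \<and> emeasure V {0} = 0 \<and>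
     (\<forall>e>0. emeasure V {a. e \<le> \<bar>a\<bar>} < \<infinity>) \<and>
     (\<integral>\<^sup>+ a. ennreal (min 1 (a\<^sup>2)) \<partial>V) < \<infinity>"

definition symmetric_measure :: "real measure \<Rightarrow> bool" where
  "symmetric_measure V \<longleftrightarrow> (\<forall>B \<in> sets borel. emeasure V B = emeasure V (uminus ` B))"

definition M_class :: "real \<Rightarrow> real \<Rightarrow> real measure set" where
  "M_class p q = {V. sets V = sets borel \<and> emeasure V {0} = 0 \<and>
     (\<forall>e>0. emeasure V {a. e \<le> \<bar>a\<bar>} < \<infinity>) \<and>
     (\<integral>\<^sup>+ a. ennreal (indicator {a. 0 < \<bar>a\<bar> \<and> \<bar>a\<bar> < 1} a * \<bar>a\<bar> powr q) \<partial>V) < \<infinity> \<and>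
     (\<integral>\<^sup>+ a. ennreal (indicator {a. 1 \<le> \<bar>a\<bar>} a * \<bar>a\<bar> powr p) \<partial>V) < \<infinity>}"

definition levy_exponent :: "real measure \<Rightarrow> real \<Rightarrow> complex" where
  "levy_exponent V \<omega> = (LINT a|V. cis (\<omega> * a) - 1
       - \<i> * complex_of_real (\<omega> * a * indicator {a. \<bar>a\<bar> < 1} a))"

end

theory Submission
  imports Defs "HOL-Probability.Characteristic_Functions"
begin

lemma E1: fixes x :: real shows "cmod (cis x - 1) \<le> \<bar>x\<bar>"
  using iexp_approx1[of x 0] by (simp add: cis_conv_exp)

lemma E2: fixes x :: real shows "cmod (cis x - 1 - \<i> * complex_of_real x) \<le> x\<^sup>2 / 2"
  using iexp_approx1[of x 1] by (simp add: cis_conv_exp power2_eq_square diff_diff_eq)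

lemma E3: fixes x :: real shows "cmod (cis x - 1) \<le> 2"
  using norm_triangle_ineq4[of "cis x" 1] by simp

lemma E4: fixes x :: real shows "\<bar>cos x - 1\<bar> \<le> x\<^sup>2 / 2"
proof -
  have "\<bar>Re (cis x - 1 - \<i> * complex_of_real x)\<bar> \<le> x\<^sup>2 / 2"
    using abs_Re_le_cmod E2 order_trans by blast
  then show ?thesis by simp
qed

lemma E5: fixes x :: real shows "cmod (cis x - 1 - \<i> * complex_of_real x) \<le> 2 + \<bar>x\<bar>"
proof -
  have "cmod (cis x - 1 - \<i> * complex_of_real x) \<le> cmod (cis x - 1) + cmod (\<i> * complex_of_real x)"
    by (rule norm_triangle_ineq4)
  also have "\<dots> \<le> 2 + \<bar>x\<bar>" using E3[of x] by (simp add: norm_mult)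
  finally show ?thesis by simp
qed

lemma L1:
  fixes z x c r s :: real
  assumes "0 < r" "r \<le> s" "z \<le> c * \<bar>x\<bar> powr s" "z \<le> c" "0 \<le> c"
  shows "z \<le> c * \<bar>x\<bar> powr r"
proof (cases "\<bar>x\<bar> \<le> 1")
  case True
  have "\<bar>x\<bar> powr s \<le> \<bar>x\<bar> powr r" using powr_mono'[of r s "\<bar>x\<bar>"] True assms by simp
  then show ?thesis using assms(3,5) by (meson mult_left_mono order_trans)
next
  case False
  then have "1 \<le> \<bar>x\<bar> powr r" using ge_one_powr_ge_zero assms by auto
  then show ?thesis using assms(4,5) by (metis mult_left_mono mult.right_neutral order_trans)
qed

lemma L2:
  fixes z x r :: real
  assumes "1 \<le> r" "r \<le> 2" "z \<le> 3 * \<bar>x\<bar> powr 2" "z \<le> 3 * \<bar>x\<bar>"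
  shows "z \<le> 3 * \<bar>x\<bar> powr r"
proof (cases "\<bar>x\<bar> \<le> 1")
  case True
  have "\<bar>x\<bar> powr 2 \<le> \<bar>x\<bar> powr r" using powr_mono'[of r 2 "\<bar>x\<bar>"] True assms by simp
  then show ?thesis using assms(3) by linarith
next
  case False
  then have "\<bar>x\<bar> powr 1 \<le> \<bar>x\<bar> powr r" using powr_mono[of 1 r "\<bar>x\<bar>"] assms by simp
  then show ?thesis using assms(4) False by simp
qed

lemma int_bound:
  fixes F :: "real \<Rightarrow> complex" and V :: "real measure"
  assumes "integrable V \<phi>1" "integrable V \<phi>2"
    and "\<And>a. cmod (F a) \<le> c1 * \<phi>1 a + c2 * \<phi>2 a"
    and "\<And>a. 0 \<le> \<phi>1 a" "\<And>a. 0 \<le> \<phi>2 a" "0 \<le> c1" "0 \<le> c2"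
  shows "cmod (LINT a|V. F a) \<le> c1 * (LINT a|V. \<phi>1 a) + c2 * (LINT a|V. \<phi>2 a)"
proof (cases "integrable V F")
  case True
  have "cmod (LINT a|V. F a) \<le> (LINT a|V. cmod (F a))" by (rule integral_norm_bound)
  also have "\<dots> \<le> (LINT a|V. c1 * \<phi>1 a + c2 * \<phi>2 a)"
    by (rule integral_mono) (use True assms in auto)
  also have "\<dots> = c1 * (LINT a|V. \<phi>1 a) + c2 * (LINT a|V. \<phi>2 a)"
    using assms by simp
  finally show ?thesis .
next
  case False
  then have "(LINT a|V. F a) = 0" by (rule not_integrable_integral_eq)
  moreover have "0 \<le> (LINT a|V. \<phi>1 a)" "0 \<le> (LINT a|V. \<phi>2 a)"
    using assms by (auto intro: integral_nonneg_AE)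
  ultimately show ?thesis using assms by simp
qed

lemma integrable_from_nn:
  fixes \<phi> :: "real \<Rightarrow> real" and V :: "real measure"
  assumes "sets V = sets borel" "\<phi> \<in> borel_measurable borel" "\<And>a. 0 \<le> \<phi> a"
    "(\<integral>\<^sup>+ a. ennreal (\<phi> a) \<partial>V) < \<infinity>"
  shows "integrable V \<phi>"
proof (rule integrableI_bounded)
  show "\<phi> \<in> borel_measurable V" using assms(1,2) measurable_cong_sets by blast
  show "(\<integral>\<^sup>+ a. ennreal (norm (\<phi> a)) \<partial>V) < \<infinity>" using assms(3,4) by simp
qed

lemma sym_distr:
  assumes "sets V = sets borel" "symmetric_measure V"
  shows "distr V borel uminus = (V :: real measure)"
proof (rule measure_eqI)
  show "sets (distr V borel uminus) = sets V" using assms by simp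
  fix B assume "B \<in> sets (distr V borel uminus)"
  then have B: "B \<in> sets borel" by simp
  have sp: "space V = UNIV" using assms(1) sets_eq_imp_space_eq by fastforce
  have "uminus -` B = uminus ` B" by (auto simp: image_iff) (metis minus_minus)
  moreover have "uminus \<in> measurable V borel" using assms(1) measurable_cong_sets by fastforce
  ultimately show "emeasure (distr V borel uminus) B = emeasure V B"
    using B assms(2) sp by (simp add: emeasure_distr symmetric_measure_def)
qed

definition Fw :: "real \<Rightarrow> real \<Rightarrow> complex" where
  "Fw \<omega> a = cis (\<omega> * a) - 1 - \<i> * complex_of_real (\<omega> * a * indicator {a. \<bar>a\<bar> < 1} a)"

lemma Fw_meas: "Fw \<omega> \<in> borel_measurable borel"
proof -
  have c: "(\<lambda>a. cis (\<omega> * a)) \<in> borel_measurable borel"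
    by (intro borel_measurable_continuous_onI continuous_intros)
  have s: "{a::real. \<bar>a\<bar> < 1} \<in> sets borel" by measurable
  have i: "(\<lambda>x. \<i> * complex_of_real (\<omega> * x * indicator {a. \<bar>a\<bar> < 1} x)) \<in> borel_measurable borel"
    using s by measurable
  show ?thesis unfolding Fw_def using c i by measurable
qed

lemma Fw_sym: "Fw \<omega> a + Fw \<omega> (- a) = 2 * complex_of_real (cos (\<omega> * a) - 1)"
  by (simp add: Fw_def complex_eq_iff indicator_def)

lemma sym_integral:
  assumes "sets V = sets borel" "symmetric_measure V" "integrable V (Fw \<omega>)"
  shows "(LINT a|V. Fw \<omega> a) = (LINT a|V. complex_of_real (cos (\<omega> * a) - 1))"
proof -
  have m: "uminus \<in> measurable V borel" using assms(1) measurable_cong_sets by fastforce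
  have d: "distr V borel uminus = V" using sym_distr assms by blast
  have i2: "integrable V (\<lambda>a. Fw \<omega> (- a))"
    using integrable_distr_eq[OF m Fw_meas, of \<omega>] assms(3) d by simp
  have e2: "(LINT a|V. Fw \<omega> (- a)) = (LINT a|V. Fw \<omega> a)"
    using integral_distr[OF m Fw_meas, of \<omega>] d by simp
  have "2 * (LINT a|V. Fw \<omega> a) = (LINT a|V. Fw \<omega> a + Fw \<omega> (- a))"
    using assms(3) i2 e2 by simp
  also have "\<dots> = (LINT a|V. 2 * complex_of_real (cos (\<omega> * a) - 1))"
    by (simp only: Fw_sym)
  also have "\<dots> = 2 * (LINT a|V. complex_of_real (cos (\<omega> * a) - 1))" by (rule integral_mult_right_zero)
  finally show ?thesis by simp
qed

lemma L3:
  fixes z x r :: real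
  assumes "1 \<le> r" "r \<le> 2" "z \<le> x\<^sup>2 / 2" "z \<le> 2 + \<bar>x\<bar>"
  shows "z \<le> 3 * \<bar>x\<bar> powr r"
proof (cases "\<bar>x\<bar> \<le> 1")
  case True
  have "\<bar>x\<bar> powr 2 \<le> \<bar>x\<bar> powr r" using powr_mono'[of r 2 "\<bar>x\<bar>"] True assms by simp
  moreover have "\<bar>x\<bar> powr 2 = x\<^sup>2" by simp
  moreover have "0 \<le> \<bar>x\<bar> powr r" by simp
  ultimately have "x\<^sup>2 \<le> \<bar>x\<bar> powr r" by simp
  then show ?thesis using assms(3) \<open>0 \<le> \<bar>x\<bar> powr r\<close> by linarith
next
  case False
  then have "\<bar>x\<bar> powr 1 \<le> \<bar>x\<bar> powr r" using powr_mono[of 1 r "\<bar>x\<bar>"] assms by simp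
  then show ?thesis using assms(4) False by simp
qed

lemma pw_sym:
  fixes \<omega> a m M :: real
  assumes "0 < m" "m \<le> 2" "0 < M" "M \<le> 2"
  shows "cmod (complex_of_real (cos (\<omega> * a) - 1)) \<le>
    2 * \<bar>\<omega>\<bar> powr m * (indicator {a. 1 \<le> \<bar>a\<bar>} a * \<bar>a\<bar> powr m) +
    2 * \<bar>\<omega>\<bar> powr M * (indicator {a. 0 < \<bar>a\<bar> \<and> \<bar>a\<bar> < 1} a * \<bar>a\<bar> powr M)"
proof -
  let ?z = "\<bar>cos (\<omega> * a) - 1\<bar>"
  have z1: "?z \<le> 2 * \<bar>\<omega> * a\<bar> powr 2"
  proof -
    have "\<bar>\<omega> * a\<bar> powr 2 = (\<omega> * a)\<^sup>2" by simp
    moreover have "0 \<le> (\<omega> * a)\<^sup>2" by simp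
    ultimately show ?thesis using E4[of "\<omega> * a"] by linarith
  qed
  have z2: "?z \<le> 2" using cos_ge_minus_one[of "\<omega>*a"] cos_le_one[of "\<omega>*a"] by linarith
  have b: "\<And>r. 0 < r \<Longrightarrow> r \<le> 2 \<Longrightarrow> ?z \<le> 2 * (\<bar>\<omega>\<bar> powr r * \<bar>a\<bar> powr r)"
    using L1[OF _ _ z1 z2] by (simp add: abs_mult powr_mult)
  have "?z \<le>
    2 * \<bar>\<omega>\<bar> powr m * (indicator {a. 1 \<le> \<bar>a\<bar>} a * \<bar>a\<bar> powr m) +
    2 * \<bar>\<omega>\<bar> powr M * (indicator {a. 0 < \<bar>a\<bar> \<and> \<bar>a\<bar> < 1} a * \<bar>a\<bar> powr M)"
  proof (cases "1 \<le> \<bar>a\<bar>")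
    case True
    then show ?thesis using b[of m] assms by (simp add: indicator_def)
  next
    case False
    show ?thesis
    proof (cases "a = 0")
      case True then show ?thesis by simp
    next
      case a0: False
      then show ?thesis using b[of M] assms False by (simp add: indicator_def)
    qed
  qed
  then show ?thesis by (simp only: norm_of_real)
qed

lemma pw_nonsym:
  fixes \<omega> a m M :: real
  assumes "0 < m" "m \<le> 1" "1 \<le> M" "M \<le> 2"
  shows "cmod (Fw \<omega> a) \<le>
    3 * \<bar>\<omega>\<bar> powr m * (indicator {a. 1 \<le> \<bar>a\<bar>} a * \<bar>a\<bar> powr m) +
    3 * \<bar>\<omega>\<bar> powr M * (indicator {a. 0 < \<bar>a\<bar> \<and> \<bar>a\<bar> < 1} a * \<bar>a\<bar> powr M)"
proof (cases "1 \<le> \<bar>a\<bar>")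
  case True
  then have F: "Fw \<omega> a = cis (\<omega> * a) - 1" by (simp add: Fw_def)
  have z1: "cmod (Fw \<omega> a) \<le> 3 * \<bar>\<omega> * a\<bar> powr 1" using E1[of "\<omega> * a"] F by simp
  have z2: "cmod (Fw \<omega> a) \<le> 3" using E3[of "\<omega> * a"] F by simp
  have "cmod (Fw \<omega> a) \<le> 3 * \<bar>\<omega> * a\<bar> powr m" using L1[OF assms(1) assms(2) z1 z2] by simp
  then show ?thesis using True by (simp add: indicator_def abs_mult powr_mult)
next
  case False
  then have F: "Fw \<omega> a = cis (\<omega> * a) - 1 - \<i> * complex_of_real (\<omega> * a)" by (simp add: Fw_def)
  have "cmod (Fw \<omega> a) \<le> 3 * \<bar>\<omega> * a\<bar> powr M"
    using L3[OF assms(3,4)] E2[of "\<omega> * a"] E5[of "\<omega> * a"] F by simp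
  then show ?thesis using False
    by (cases "a = 0") (auto simp: indicator_def abs_mult powr_mult)
qed

theorem corollary3p13:
  fixes V :: "real measure" and p q :: real
  assumes "levy_measure V"
    and "0 < p" and "p \<le> q" and "q \<le> 2"
  defines "A \<equiv> {p, q} \<union> (if symmetric_measure V then {} else {1})"
  assumes "V \<in> M_class (Min A) (Max A)"
  shows "\<exists>\<kappa>1 \<kappa>2. \<kappa>1 \<ge> 0 \<and> \<kappa>2 \<ge> 0 \<and>
     (\<forall>\<omega>::real. cmod (levy_exponent V \<omega>) \<le> \<kappa>1 * \<bar>\<omega>\<bar> powr (Min A) + \<kappa>2 * \<bar>\<omega>\<bar> powr (Max A))"
proof -
  define m where "m = Min A"
  define M where "M = Max A"
  have fA: "finite A" "A \<noteq> {}" unfolding A_def by auto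
  have Apos: "\<And>x. x \<in> A \<Longrightarrow> 0 < x \<and> x \<le> 2" using assms(2-4) unfolding A_def
    by (auto split: if_splits)
  have m0: "0 < m" "m \<le> 2" using Min_in[OF fA] Apos unfolding m_def by auto
  have M0: "0 < M" "M \<le> 2" using Max_in[OF fA] Apos unfolding M_def by auto
  have ns: "\<not> symmetric_measure V \<Longrightarrow> m \<le> 1 \<and> 1 \<le> M"
    using Min_le[OF fA(1), of 1] Max_ge[OF fA(1), of 1] unfolding m_def M_def A_def by auto
  have sV: "sets V = sets borel" using assms(1) unfolding levy_measure_def by blast
  define \<phi>1 where "\<phi>1 a = indicator {a. 1 \<le> \<bar>a\<bar>} a * \<bar>a\<bar> powr m" for a :: real
  define \<phi>2 where "\<phi>2 a = indicator {a. 0 < \<bar>a\<bar> \<and> \<bar>a\<bar> < 1} a * \<bar>a\<bar> powr M" for a :: real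
  have p1: "\<And>a. 0 \<le> \<phi>1 a" "\<And>a. 0 \<le> \<phi>2 a" unfolding \<phi>1_def \<phi>2_def by auto
  have s1: "{a::real. 1 \<le> \<bar>a\<bar>} \<in> sets borel" by measurable
  have s2: "{a::real. 0 < \<bar>a\<bar> \<and> \<bar>a\<bar> < 1} \<in> sets borel" by measurable
  have i1: "integrable V \<phi>1"
  proof (rule integrable_from_nn[OF sV])
    show "\<phi>1 \<in> borel_measurable borel" unfolding \<phi>1_def using s1 by measurable
    show "(\<integral>\<^sup>+ a. ennreal (\<phi>1 a) \<partial>V) < \<infinity>"
      using assms(6) unfolding M_class_def \<phi>1_def m_def by blast
  qed (rule p1)
  have i2: "integrable V \<phi>2"
  proof (rule integrable_from_nn[OF sV])
    show "\<phi>2 \<in> borel_measurable borel" unfolding \<phi>2_def using s2 by measurable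
    show "(\<integral>\<^sup>+ a. ennreal (\<phi>2 a) \<partial>V) < \<infinity>"
      using assms(6) unfolding M_class_def \<phi>2_def M_def by blast
  qed (rule p1)
  define I1 where "I1 = (LINT a|V. \<phi>1 a)"
  define I2 where "I2 = (LINT a|V. \<phi>2 a)"
  have I0: "0 \<le> I1" "0 \<le> I2" unfolding I1_def I2_def using p1 by (auto intro: integral_nonneg_AE)
  have le: "\<And>\<omega>. levy_exponent V \<omega> = (LINT a|V. Fw \<omega> a)"
    unfolding levy_exponent_def Fw_def by simp
  show ?thesis
  proof (cases "symmetric_measure V")
    case True
    have "cmod (levy_exponent V \<omega>) \<le> (2 * I1) * \<bar>\<omega>\<bar> powr m + (2 * I2) * \<bar>\<omega>\<bar> powr M" for \<omega>
    proof (cases "integrable V (Fw \<omega>)")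
      case True2: True
      have "cmod (levy_exponent V \<omega>) = cmod (LINT a|V. complex_of_real (cos (\<omega> * a) - 1))"
        using le sym_integral[OF sV True True2] by simp
      also have "\<dots> \<le> (2 * \<bar>\<omega>\<bar> powr m) * I1 + (2 * \<bar>\<omega>\<bar> powr M) * I2"
        unfolding I1_def I2_def
        by (rule int_bound[OF i1 i2]) (use pw_sym[OF m0 M0] p1 in \<open>auto simp: \<phi>1_def \<phi>2_def\<close>)
      finally show ?thesis by (simp add: algebra_simps)
    next
      case False
      then have "levy_exponent V \<omega> = 0" using le not_integrable_integral_eq by metis
      then show ?thesis using I0 by simp
    qed
    then show ?thesis using I0 unfolding m_def M_def by (metis mult_nonneg_nonneg zero_le_numeral)
  next
    case False
    have mM: "0 < m" "m \<le> 1" "1 \<le> M" "M \<le> 2" using ns[OF False] m0 M0 by auto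
    have "cmod (levy_exponent V \<omega>) \<le> (3 * I1) * \<bar>\<omega>\<bar> powr m + (3 * I2) * \<bar>\<omega>\<bar> powr M" for \<omega>
    proof -
      have "cmod (levy_exponent V \<omega>) \<le> (3 * \<bar>\<omega>\<bar> powr m) * I1 + (3 * \<bar>\<omega>\<bar> powr M) * I2"
        unfolding le I1_def I2_def
        by (rule int_bound[OF i1 i2]) (use pw_nonsym[OF mM] p1 in \<open>auto simp: \<phi>1_def \<phi>2_def\<close>)
      then show ?thesis by (simp add: algebra_simps)
    qed
    then show ?thesis using I0 unfolding m_def M_def by (metis mult_nonneg_nonneg zero_le_numeral)
  qed
qed

end
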